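(* Let $N\ge 8$ and let $\alpha=1/4$, $a=3/2$, $\hat a=a/2=3/4$, $\alpha_1=2$, $a_1=-5/2$, $b_1=2$, $c_1=1/2$. Define the $N\times N$ matrices $A$ and $B$ by the following rows (all unspecified entries are zero): - row $1$: $A_{11}=1$, $A_{12}=\alpha_1$; $B_{11}=a_1$, $B_{12}=b_1$, $B_{13}=c_1$; - row $N$: $A_{NN}=1$, $A_{N,N-1}=\alpha_1$; $B_{NN}=-a_1$, $B_{N,N-1}=-b_1$, $B_{N,N-2}=-c_1$; - rows $j=2,\ldots,N-1$: $A_{j,j-1}=A_{j,j+1}=\alpha$, $A_{jj}=1$; $B_{j,j-1}=-\hat a$, $B_{j,j+1}=\hat a$. (So $A\mathbf f'=B\mathbf f$ is the fourth-order Padé scheme $\alpha f'_{j-1}+f'_j+\alpha f'_{j+1}=\tfrac a2(f_{j+1}-f_{j-1})$ at interior points, closed by the third-order one-sided schemes $f'_1+\alpha_1f'_2=a_1f_1+b_1f_2+c_1f_3$ and $f'_N+\alpha_1f'_{N-1}=-(a_1f_N+b_1f_{N-1}+c_1f_{N-2})$, with unit grid spacing in the index variable.) Define $\widehat{\mathbf w}\in\mathbb R^N$ by $\widehat w_1=\widehat w_N=3/8$, $\widehat w_2=\widehat w_{N-1}=7/6$, $\widehat w_3=\widehat w_{N-2}=23/24$, and $\widehat w_j=1$ for $4\le j\le N-3$. Then: (i) the vector $\mathbf w$ with $w_1=w_N=3/8$, $w_2=w_{N-1}=3/4$, and $w_j=1$ for $3\le j\le N-2$ satisfies $\mathbf w^T\mathbf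 b_i=0$ for all $2\le i\le N-1$ (where $\mathbf b_i$ is the $i$-th column of $B$), $\mathbf w^T\mathbf b_1=-3/2$, $\mathbf w^T\mathbf b_N=3/2$, and $\widehat{\mathbf w}^T=-\mathbf w^TA/(\mathbf w^T\mathbf b_1)$; (ii) consequently, for any positive $h_1,\ldots,h_N$ and any functions $u(t),f(t)\in\mathbb R^N$ such that $\mathbf U=(h_1u_1,\ldots,h_Nu_N)^T$ satisfies $A\,d\mathbf U/dt+Bf=0$, one has $$\frac{d}{dt}\sum_{j=1}^N\widehat w_j\,h_j\,u_j=f_1-f_N .$$
   Context: Here $h_i^{-1}=(d\xi/dx)_i$ is the grid metric factor for a mapped grid $x(\xi)$ with $\xi_i=i$, and the semi-discrete system $A\,d\mathbf U/dt+Bf=0$ is the Padé spatial discretization of $\partial_t u+\partial_x f=0$. The identity in (ii) is a discrete analogue of $\frac{d}{dt}\int_0^L u\,dx=f(0)-f(L)$. *)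

theory Defs
  imports Complex_Main
begin

text \<open>Matrices and vectors are 1-indexed functions on nat; entries with an index
outside 1..N are zero.  Parameters of the Pade scheme.\<close>

definition pa_alpha :: real where "pa_alpha = 1/4"
definition pa_a :: real where "pa_a = 3/2"
definition pa_ahat :: real where "pa_ahat = pa_a / 2"
definition pa_alpha1 :: real where "pa_alpha1 = 2"
definition pa_a1 :: real where "pa_a1 = -5/2"
definition pa_b1 :: real where "pa_b1 = 2"
definition pa_c1 :: real where "pa_c1 = 1/2"

definition padeA :: "nat \<Rightarrow> nat \<Rightarrow> nat \<Rightarrow> real" where
  "padeA N i j =
    (if i = 1 then (if j = 1 then 1 else if j = 2 then pa_alpha1 else 0)
     else if i = N then (if j = N then 1 else if j = N - 1 then pa_alpha1 else 0)
     else if 2 \<le> i \<and> i \<le> N - 1 then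
       (if j = i then 1 else if j = i - 1 \<or> j = i + 1 then pa_alpha else 0)
     else 0)"

definition padeB :: "nat \<Rightarrow> nat \<Rightarrow> nat \<Rightarrow> real" where
  "padeB N i j =
    (if i = 1 then (if j = 1 then pa_a1 else if j = 2 then pa_b1 else if j = 3 then pa_c1 else 0)
     else if i = N then (if j = N then - pa_a1 else if j = N - 1 then - pa_b1
                         else if j = N - 2 then - pa_c1 else 0)
     else if 2 \<le> i \<and> i \<le> N - 1 then
       (if j = i - 1 then - pa_ahat else if j = i + 1 then pa_ahat else 0)
     else 0)"

definition padeW :: "nat \<Rightarrow> nat \<Rightarrow> real" where
  "padeW N j =
    (if j = 1 \<or> j = N then 3/8
     else if j = 2 \<or> j = N - 1 then 3/4
     else if 3 \<le> j \<and> j \<le> N - 2 then 1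
     else 0)"

definition padeWhat :: "nat \<Rightarrow> nat \<Rightarrow> real" where
  "padeWhat N j =
    (if j = 1 \<or> j = N then 3/8
     else if j = 2 \<or> j = N - 1 then 7/6
     else if j = 3 \<or> j = N - 2 then 23/24
     else if 4 \<le> j \<and> j \<le> N - 3 then 1
     else 0)"

end

theory Submission imports Defs begin
lemma split_sum:
  fixes N :: nat
  assumes "N \<ge> 3"
  shows "(\<Sum>k=1..N. g k) = g 1 + g N + (\<Sum>k=2..N-1. (g k::real))"
proof -
  have e: "{1..N} = insert 1 (insert N {2..N-1})" using assms by auto
  have "(\<Sum>k=1..N. g k) = (\<Sum>k\<in>insert 1 (insert N {2..N-1}). g k)" by (subst e) (rule refl)
  also have "\<dots> = g 1 + (g N + (\<Sum>k=2..N-1. g k))"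
    using assms by (subst sum.insert; auto)+
  finally show ?thesis by simp
qed

lemma Aint: assumes k: "k \<in> {2..N-1}" shows "w * padeA N k j =
   (if k = j then w else 0) + (if k = j+1 then pa_alpha * w else 0) + (if k = j - 1 \<and> 1 \<le> j then pa_alpha * w else 0)"
proof -
  from k have k1: "k \<noteq> 1" "k \<noteq> N" "2 \<le> k" "k \<le> N - 1" by auto
  have e: "padeA N k j = (if j = k then 1 else if j = k - 1 \<or> j = k + 1 then pa_alpha else 0)"
    unfolding padeA_def using k1 by simp
  consider "j = k" | "j = k - 1" | "j = k + 1" | "j \<noteq> k" "j \<noteq> k - 1" "j \<noteq> k + 1" by blast
  then show ?thesis
  proof cases
    case 1 then show ?thesis using k1 e by auto
  next
    case 2 then show ?thesis using k1 e by auto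
  next
    case 3 then show ?thesis using k1 e by auto
  next
    case 4 then show ?thesis using k1 e by auto
  qed
qed
lemma Bint': assumes k: "k \<in> {2..N-1}" shows "w * padeB N k i =
   (if k = i+1 then - pa_ahat * w else 0) + (if k = i - 1 \<and> 1 \<le> i then pa_ahat * w else 0)"
proof -
  from k have k1: "k \<noteq> 1" "k \<noteq> N" "2 \<le> k" "k \<le> N - 1" by auto
  have e: "padeB N k i = (if i = k - 1 then - pa_ahat else if i = k + 1 then pa_ahat else 0)"
    unfolding padeB_def using k1 by simp
  consider "i = k - 1" | "i = k + 1" | "i \<noteq> k - 1" "i \<noteq> k + 1" by blast
  then show ?thesis
  proof cases
    case 1 then show ?thesis using k1 e by auto
  next
    case 2 then show ?thesis using k1 e by auto
  next
    case 3 then show ?thesis using k1 e by auto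
  qed
qed
lemma delta1: "finite S \<Longrightarrow> (\<Sum>k\<in>S. if k = c then g k else 0) = (if c \<in> S then g c else (0::real))"
  by simp
lemma delta2: "finite S \<Longrightarrow> (\<Sum>k\<in>S. if k = c \<and> P then g k else 0) = (if c \<in> S \<and> P then g c else (0::real))"
  by (cases P) (simp_all add: sum.delta')

lemma colB: assumes "N \<ge> 8" shows "(\<Sum>k=1..N. padeW N k * padeB N k i) =
   padeW N 1 * padeB N 1 i + padeW N N * padeB N N i
   + (if i+1 \<in> {2..N-1} then - pa_ahat * padeW N (i+1) else 0)
   + (if i-1 \<in> {2..N-1} \<and> 1 \<le> i then pa_ahat * padeW N (i-1) else 0)"
proof -
  have "(\<Sum>k=2..N-1. padeW N k * padeB N k i) = (\<Sum>k=2..N-1. (if k = i+1 then - pa_ahat * padeW N k else 0) + (if k = i - 1 \<and> 1 \<le> i then pa_ahat * padeW N k else 0))"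
    proof (intro sum.cong refl)
    fix x assume x: "x \<in> {2..N-1}"
    show "padeW N x * padeB N x i = (if x = i + 1 then - pa_ahat * padeW N x else 0) + (if x = i - 1 \<and> 1 \<le> i then pa_ahat * padeW N x else 0)"
      by (rule Bint'[OF x])
  qed
  also have "\<dots> = (\<Sum>k=2..N-1. (if k = i+1 then - pa_ahat * padeW N k else 0)) + (\<Sum>k=2..N-1. (if k = i - 1 \<and> 1 \<le> i then pa_ahat * padeW N k else 0))"
    by (rule sum.distrib)
  also have "\<dots> = (if i+1 \<in> {2..N-1} then - pa_ahat * padeW N (i+1) else 0)
   + (if i-1 \<in> {2..N-1} \<and> 1 \<le> i then pa_ahat * padeW N (i-1) else 0)" (is "_ = ?R")
    by (simp only: delta1[OF finite_atLeastAtMost] delta2[OF finite_atLeastAtMost])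
  finally have X: "(\<Sum>k=2..N-1. padeW N k * padeB N k i) = ?R" .
  have S: "(\<Sum>k=1..N. padeW N k * padeB N k i) = padeW N 1 * padeB N 1 i + padeW N N * padeB N N i + (\<Sum>k=2..N-1. padeW N k * padeB N k i)"
  proof -
    have "3 \<le> N" using assms by simp
    from split_sum[OF this, of "\<lambda>k. padeW N k * padeB N k i"] show ?thesis .
  qed
  show ?thesis apply (subst S) apply (subst X) apply (simp only: add.assoc) done
qed

lemma colA: assumes "N \<ge> 8" shows "(\<Sum>k=1..N. padeW N k * padeA N k j) =
   padeW N 1 * padeA N 1 j + padeW N N * padeA N N j
   + (if j \<in> {2..N-1} then padeW N j else 0)
   + (if j+1 \<in> {2..N-1} then pa_alpha * padeW N (j+1) else 0)
   + (if j-1 \<in> {2..N-1} \<and> 1 \<le> j then pa_alpha * padeW N (j-1) else 0)"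
proof -
  have "(\<Sum>k=2..N-1. padeW N k * padeA N k j) = (\<Sum>k=2..N-1. (if k = j then padeW N k else 0) + (if k = j+1 then pa_alpha * padeW N k else 0) + (if k = j - 1 \<and> 1 \<le> j then pa_alpha * padeW N k else 0))"
    proof (intro sum.cong refl)
    fix x assume x: "x \<in> {2..N-1}"
    show "padeW N x * padeA N x j = (if x = j then padeW N x else 0) + (if x = j + 1 then pa_alpha * padeW N x else 0) + (if x = j - 1 \<and> 1 \<le> j then pa_alpha * padeW N x else 0)"
      by (rule Aint[OF x])
  qed
  also have "\<dots> = (\<Sum>k=2..N-1. (if k = j then padeW N k else 0)) + (\<Sum>k=2..N-1. (if k = j+1 then pa_alpha * padeW N k else 0)) + (\<Sum>k=2..N-1. (if k = j - 1 \<and> 1 \<le> j then pa_alpha * padeW N k else 0))"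
    by (simp only: sum.distrib)
  also have "\<dots> = (if j \<in> {2..N-1} then padeW N j else 0)
   + (if j+1 \<in> {2..N-1} then pa_alpha * padeW N (j+1) else 0)
   + (if j-1 \<in> {2..N-1} \<and> 1 \<le> j then pa_alpha * padeW N (j-1) else 0)" (is "_ = ?R")
    by (simp only: delta1[OF finite_atLeastAtMost] delta2[OF finite_atLeastAtMost])
  finally have X: "(\<Sum>k=2..N-1. padeW N k * padeA N k j) = ?R" .
  have S: "(\<Sum>k=1..N. padeW N k * padeA N k j) = padeW N 1 * padeA N 1 j + padeW N N * padeA N N j + (\<Sum>k=2..N-1. padeW N k * padeA N k j)"
  proof -
    have "3 \<le> N" using assms by simp
    from split_sum[OF this, of "\<lambda>k. padeW N k * padeA N k j"] show ?thesis .
  qed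
  show ?thesis apply (subst S) apply (subst X) apply (simp only: add.assoc) done
qed

lemmas defs = padeB_def padeA_def padeW_def padeWhat_def pa_alpha_def pa_a_def pa_ahat_def pa_alpha1_def pa_a1_def pa_b1_def pa_c1_def

lemma midB: "N \<ge> 8 \<Longrightarrow> 4 \<le> i \<Longrightarrow> i \<le> N - 3 \<Longrightarrow> padeB N 1 i = 0 \<and> padeB N N i = 0 \<and> padeW N (i+1) = 1 \<and> padeW N (i-1) = 1"
  unfolding padeB_def padeW_def by auto
lemma midA: "N \<ge> 8 \<Longrightarrow> 4 \<le> i \<Longrightarrow> i \<le> N - 3 \<Longrightarrow> padeA N 1 i = 0 \<and> padeA N N i = 0 \<and> padeW N i = 1 \<and> padeWhat N i = 1"
  unfolding padeA_def padeW_def padeWhat_def by auto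

lemma P1: assumes "N \<ge> 8" "i \<in> {2..N-1}" shows "(\<Sum>k=1..N. padeW N k * padeB N k i) = 0"
proof -
  obtain M where M: "N = M + 8" using assms(1) le_Suc_ex by (metis add.commute)
  have "i = 2 \<or> i = 3 \<or> (4 \<le> i \<and> i \<le> N - 3) \<or> i = M + 6 \<or> i = M + 7" using assms M by auto
  then show ?thesis
  proof (elim disjE)
    assume "4 \<le> i \<and> i \<le> N - 3"
    then have m: "i+1 \<in> {2..N-1}" "i-1 \<in> {2..N-1} \<and> 1 \<le> i" by auto
    show ?thesis unfolding colB[OF assms(1)] using midB[of N i] assms m \<open>4 \<le> i \<and> i \<le> N - 3\<close> by (simp only: if_True) simp
  qed (simp_all only: colB[OF assms(1)], simp_all add: M defs)
qed

lemma P4: assumes "N \<ge> 8" "j \<in> {1..N}" shows "padeWhat N j = 2/3 * (\<Sum>k=1..N. padeW N k * padeA N k j)"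
proof -
  obtain M where M: "N = M + 8" using assms(1) le_Suc_ex by (metis add.commute)
  have "j = 1 \<or> j = 2 \<or> j = 3 \<or> (4 \<le> j \<and> j \<le> N - 3) \<or> j = M + 6 \<or> j = M + 7 \<or> j = M + 8" using assms M by auto
  then show ?thesis
  proof (elim disjE)
    assume j: "4 \<le> j \<and> j \<le> N - 3"
    have "padeW N (j+1) = 1 \<and> padeW N (j-1) = 1" using midB[of N j] j assms by simp
    have m: "j \<in> {2..N-1}" "j+1 \<in> {2..N-1}" "j-1 \<in> {2..N-1} \<and> 1 \<le> j" using j by auto
    show ?thesis unfolding colA[OF assms(1)] using midA[of N j] j assms m \<open>padeW N (j+1) = 1 \<and> padeW N (j-1) = 1\<close> by (simp add: pa_alpha_def)
  qed (simp_all only: colA[OF assms(1)], simp_all add: M defs)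
qed

lemma P23: assumes "N \<ge> 8" shows "(\<Sum>k=1..N. padeW N k * padeB N k 1) = -3/2" "(\<Sum>k=1..N. padeW N k * padeB N k N) = 3/2"
proof -
  obtain M where M: "N = M + 8" using assms(1) le_Suc_ex by (metis add.commute)
  show "(\<Sum>k=1..N. padeW N k * padeB N k 1) = -3/2" unfolding colB[OF assms] by (simp add: M defs)
  show "(\<Sum>k=1..N. padeW N k * padeB N k N) = 3/2" unfolding colB[OF assms] by (simp add: M defs)
qed
theorem mainTheorem2:
  fixes N :: nat
  assumes N8: "N \<ge> 8"
  shows
   "(\<forall>i\<in>{2..N-1}. (\<Sum>k=1..N. padeW N k * padeB N k i) = 0)
    \<and> (\<Sum>k=1..N. padeW N k * padeB N k 1) = -3/2
    \<and> (\<Sum>k=1..N. padeW N k * padeB N k N) = 3/2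
    \<and> (\<forall>j\<in>{1..N}. padeWhat N j =
          - (\<Sum>k=1..N. padeW N k * padeA N k j) / (\<Sum>k=1..N. padeW N k * padeB N k 1))
    \<and> (\<forall>(h :: nat \<Rightarrow> real) (u :: real \<Rightarrow> nat \<Rightarrow> real) (du :: real \<Rightarrow> nat \<Rightarrow> real)
          (f :: real \<Rightarrow> nat \<Rightarrow> real).
         (\<forall>j\<in>{1..N}. h j > 0)
         \<longrightarrow> (\<forall>t. \<forall>j\<in>{1..N}. ((\<lambda>s. u s j) has_real_derivative du t j) (at t))
         \<longrightarrow> (\<forall>t. \<forall>i\<in>{1..N}.
                (\<Sum>j=1..N. padeA N i j * (h j * du t j)) + (\<Sum>j=1..N. padeB N i j * f t j) = 0)
         \<longrightarrow> (\<forall>t. ((\<lambda>s. \<Sum>j=1..N. padeWhat N j * h j * u s j)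
                     has_real_derivative (f t 1 - f t N)) (at t)))"
  proof -
  have P1': "\<forall>i\<in>{2..N-1}. (\<Sum>k=1..N. padeW N k * padeB N k i) = 0" using P1[OF N8] by blast
  note P2 = P23(1)[OF N8] and P3 = P23(2)[OF N8]
  have WA: "\<forall>j\<in>{1..N}. padeWhat N j = 2/3 * (\<Sum>k=1..N. padeW N k * padeA N k j)" using P4[OF N8] by blast
  have P4': "\<forall>j\<in>{1..N}. padeWhat N j =
          - (\<Sum>k=1..N. padeW N k * padeA N k j) / (\<Sum>k=1..N. padeW N k * padeB N k 1)"
    using WA P2 by simp
  have P5: "\<forall>(h :: nat \<Rightarrow> real) (u :: real \<Rightarrow> nat \<Rightarrow> real) (du :: real \<Rightarrow> nat \<Rightarrow> real)
          (f :: real \<Rightarrow> nat \<Rightarrow> real).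
         (\<forall>j\<in>{1..N}. h j > 0)
         \<longrightarrow> (\<forall>t. \<forall>j\<in>{1..N}. ((\<lambda>s. u s j) has_real_derivative du t j) (at t))
         \<longrightarrow> (\<forall>t. \<forall>i\<in>{1..N}.
                (\<Sum>j=1..N. padeA N i j * (h j * du t j)) + (\<Sum>j=1..N. padeB N i j * f t j) = 0)
         \<longrightarrow> (\<forall>t. ((\<lambda>s. \<Sum>j=1..N. padeWhat N j * h j * u s j)
                     has_real_derivative (f t 1 - f t N)) (at t))"
  proof (intro allI impI)
    fix h :: "nat \<Rightarrow> real" and u du :: "real \<Rightarrow> nat \<Rightarrow> real" and f :: "real \<Rightarrow> nat \<Rightarrow> real" and t :: real
    assume D: "\<forall>t. \<forall>j\<in>{1..N}. ((\<lambda>s. u s j) has_real_derivative du t j) (at t)"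
      and E: "\<forall>t. \<forall>i\<in>{1..N}.
                (\<Sum>j=1..N. padeA N i j * (h j * du t j)) + (\<Sum>j=1..N. padeB N i j * f t j) = 0"
    have d: "((\<lambda>s. \<Sum>j=1..N. padeWhat N j * h j * u s j) has_real_derivative
             (\<Sum>j=1..N. padeWhat N j * h j * du t j)) (at t)"
      by (rule DERIV_sum) (use D in \<open>auto intro!: DERIV_cmult\<close>)
    have "(\<Sum>j=1..N. padeWhat N j * h j * du t j)
        = (\<Sum>j=1..N. 2/3 * (\<Sum>k=1..N. padeW N k * padeA N k j) * (h j * du t j))"
      using WA by (intro sum.cong) auto
    also have "\<dots> = 2/3 * (\<Sum>j=1..N. \<Sum>k=1..N. padeW N k * (padeA N k j * (h j * du t j)))"
      by (simp add: sum_distrib_left sum_distrib_right mult.assoc)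
    also have "\<dots> = 2/3 * (\<Sum>k=1..N. padeW N k * (\<Sum>j=1..N. padeA N k j * (h j * du t j)))"
      by (simp only: sum_distrib_left) (rule sum.swap)
    also have "\<dots> = 2/3 * (\<Sum>k=1..N. padeW N k * (- (\<Sum>j=1..N. padeB N k j * f t j)))"
    proof -
      have "\<And>k. k \<in> {1..N} \<Longrightarrow> (\<Sum>j=1..N. padeA N k j * (h j * du t j)) = - (\<Sum>j=1..N. padeB N k j * f t j)"
        using E by (simp add: eq_neg_iff_add_eq_0)
      then show ?thesis by simp
    qed
    also have "\<dots> = -2/3 * (\<Sum>k=1..N. \<Sum>j=1..N. padeW N k * padeB N k j * f t j)"
      by (simp add: sum_distrib_left sum_negf mult.assoc)
    also have "(\<Sum>k=1..N. \<Sum>j=1..N. padeW N k * padeB N k j * f t j) = (\<Sum>j=1..N. (\<Sum>k=1..N. padeW N k * padeB N k j) * f t j)"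
      by (simp only: sum_distrib_right) (rule sum.swap)
    also have "(\<Sum>j=1..N. (\<Sum>k=1..N. padeW N k * padeB N k j) * f t j)
        = (\<Sum>k=1..N. padeW N k * padeB N k 1) * f t 1 + (\<Sum>k=1..N. padeW N k * padeB N k N) * f t N"
    proof -
      have "3 \<le> N" using N8 by simp
      from split_sum[OF this, of "\<lambda>j. (\<Sum>k=1..N. padeW N k * padeB N k j) * f t j"]
      show ?thesis using P1' by simp
    qed
    finally have eq: "(\<Sum>j=1..N. padeWhat N j * h j * du t j) = -2/3 * ((\<Sum>k=1..N. padeW N k * padeB N k 1) * f t 1 + (\<Sum>k=1..N. padeW N k * padeB N k N) * f t N)" .
    have "(\<Sum>j=1..N. padeWhat N j * h j * du t j) = f t 1 - f t N"
      unfolding eq P2 P3 by (simp add: field_simps)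
    with d show "((\<lambda>s. \<Sum>j=1..N. padeWhat N j * h j * u s j)
                     has_real_derivative (f t 1 - f t N)) (at t)" by simp
  qed
  show ?thesis using P1' P2 P3 P4' P5 by blast
qed

end
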